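(* For every instance $I$ of University Dual Admission, the associated hypergraph $\mathcal{H}_I$ is a network hypergraph; in particular its incidence matrix is totally unimodular.
   Context: UDA instance: universities $U$, disjoint program sets $P_i$ for each $u_i\in U$ ($P=\bigcup_i P_i$), students $S$; an acceptable triple is $(s_j,u_i,p_{ik})$ with $p_{ik}\in P_i$ acceptable to student $s_j$. The associated hypergraph $\mathcal{H}_I$ has vertex set $S\cup U\cup P$ and one hyperedge $\{s_j,u_i,p_{ik}\}$ for each acceptable triple. The incidence matrix of a hypergraph $(V,\mathcal{E})$ is the $|V|\times|\mathcal{E}|$ 0/1 matrix with entry 1 at $(v,e)$ iff $v\in e$. A matrix $A$ is a network matrix if there is a directed graph $D=(V,E)$ and $F\subseteq E$ forming a spanning tree of $D$ in the undirected sense, such that rows of $A$ are indexed by $F$, columns by $E\setminus F$, and the entry at $(f,e)$ is $1$ if $f$ lies on the unique (undirected) cycle $C_{e,f}$ of $F\cup\{e\}$ with the same orientation as $e$ along it, $-1$ if it lies on it with opposite orientation, and $0$ if $f$ is not on it. A hypergraph is a network hypergraph if its incidence matrix is a network matrix. *)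

theory Defs
  imports "Jordan_Normal_Form.Determinant"
begin

text \<open>Vertices and arcs are labelled by natural numbers
  (any finite digraph can be relabelled this way).  An undirected walk is a
  list of steps (a, d): arc a traversed forwards (d = True, tail to head) or
  backwards (d = False, head to tail).\<close>

definition step_start :: "(nat \<Rightarrow> nat) \<Rightarrow> (nat \<Rightarrow> nat) \<Rightarrow> nat \<times> bool \<Rightarrow> nat" where
  "step_start ta he s = (if snd s then ta (fst s) else he (fst s))"

definition step_end :: "(nat \<Rightarrow> nat) \<Rightarrow> (nat \<Rightarrow> nat) \<Rightarrow> nat \<times> bool \<Rightarrow> nat" where
  "step_end ta he s = (if snd s then he (fst s) else ta (fst s))"

fun is_walk :: "(nat \<Rightarrow> nat) \<Rightarrow> (nat \<Rightarrow> nat) \<Rightarrow> nat set \<Rightarrow> nat \<Rightarrow> (nat \<times> bool) list \<Rightarrow> nat \<Rightarrow> bool" where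
  "is_walk ta he F x [] y = (x = y)"
| "is_walk ta he F x (s # w) y =
     (fst s \<in> F \<and> step_start ta he s = x \<and> is_walk ta he F (step_end ta he s) w y)"

fun walk_verts :: "(nat \<Rightarrow> nat) \<Rightarrow> (nat \<Rightarrow> nat) \<Rightarrow> nat \<Rightarrow> (nat \<times> bool) list \<Rightarrow> nat list" where
  "walk_verts ta he x [] = [x]"
| "walk_verts ta he x (s # w) = x # walk_verts ta he (step_end ta he s) w"

definition is_simple_path :: "(nat \<Rightarrow> nat) \<Rightarrow> (nat \<Rightarrow> nat) \<Rightarrow> nat set \<Rightarrow> nat \<Rightarrow> (nat \<times> bool) list \<Rightarrow> nat \<Rightarrow> bool" where
  "is_simple_path ta he F x w y \<longleftrightarrow> is_walk ta he F x w y \<and> distinct (walk_verts ta he x w)"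

text \<open>Undirected cycle: nonempty closed walk with pairwise distinct arcs and with
  pairwise distinct vertices apart from the repeated start/end vertex.
  (Loops and pairs of parallel/antiparallel arcs count as cycles.)\<close>
definition has_cycle :: "(nat \<Rightarrow> nat) \<Rightarrow> (nat \<Rightarrow> nat) \<Rightarrow> nat set \<Rightarrow> bool" where
  "has_cycle ta he F \<longleftrightarrow> (\<exists>x w. w \<noteq> [] \<and> is_walk ta he F x w x \<and>
      distinct (map fst w) \<and> distinct (butlast (walk_verts ta he x w)))"

definition digraph :: "nat set \<Rightarrow> nat set \<Rightarrow> (nat \<Rightarrow> nat) \<Rightarrow> (nat \<Rightarrow> nat) \<Rightarrow> bool" where
  "digraph Vs Es ta he \<longleftrightarrow> finite Vs \<and> finite Es \<and> (\<forall>a\<in>Es. ta a \<in> Vs \<and> he a \<in> Vs)"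

definition spanning_tree :: "nat set \<Rightarrow> nat set \<Rightarrow> (nat \<Rightarrow> nat) \<Rightarrow> (nat \<Rightarrow> nat) \<Rightarrow> nat set \<Rightarrow> bool" where
  "spanning_tree Vs Es ta he F \<longleftrightarrow> F \<subseteq> Es \<and>
     (\<forall>x\<in>Vs. \<forall>y\<in>Vs. \<exists>w. is_walk ta he F x w y) \<and> \<not> has_cycle ta he F"

text \<open>M is a network matrix if there are a digraph D = (Vs, Es) and a
  spanning tree F of D, together with bijections identifying the rows with F and
  the columns with Es - F, such that the entry at (f, e) is +1 / -1 / 0 according
  as f lies on the unique cycle C_{e,f} of F + e with the same orientation as e /
  opposite orientation / not at all.  Traversing that cycle in the direction of e
  means: e from tail e to head e, then the tree path from head e back to tail e;
  hence f has the orientation of e iff it is traversed forwards on the (unique)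
  simple tree path from head e to tail e.\<close>

definition network_matrix :: "'r set \<Rightarrow> 'c set \<Rightarrow> ('r \<Rightarrow> 'c \<Rightarrow> int) \<Rightarrow> bool" where
  "network_matrix R C M \<longleftrightarrow>
    (\<exists>(Vs::nat set) (Es::nat set) (ta::nat \<Rightarrow> nat) (he::nat \<Rightarrow> nat) (F::nat set)
       (\<rho>::'r \<Rightarrow> nat) (\<gamma>::'c \<Rightarrow> nat).
       digraph Vs Es ta he \<and> spanning_tree Vs Es ta he F \<and>
       bij_betw \<rho> R F \<and> bij_betw \<gamma> C (Es - F) \<and>
       (\<forall>c\<in>C. \<exists>p. is_simple_path ta he F (he (\<gamma> c)) p (ta (\<gamma> c)) \<and>
          (\<forall>r\<in>R. M r c = (if (\<rho> r, True) \<in> set p then 1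
                            else if (\<rho> r, False) \<in> set p then -1 else 0))))"

definition totally_unimodular :: "'r set \<Rightarrow> 'c set \<Rightarrow> ('r \<Rightarrow> 'c \<Rightarrow> int) \<Rightarrow> bool" where
  "totally_unimodular R C M \<longleftrightarrow>
    (\<forall>rs cs. distinct rs \<and> distinct cs \<and> length rs = length cs \<and>
        set rs \<subseteq> R \<and> set cs \<subseteq> C \<longrightarrow>
        det (mat (length rs) (length cs) (\<lambda>(i, j). M (rs ! i) (cs ! j))) \<in> {-1, 0, 1})"

definition incidence_matrix :: "'v set \<Rightarrow> 'v set set \<Rightarrow> 'v \<Rightarrow> 'v set \<Rightarrow> int" where
  "incidence_matrix V E = (\<lambda>v e. if v \<in> e then 1 else 0)"

definition network_hypergraph :: "'v set \<Rightarrow> 'v set set \<Rightarrow> bool" where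
  "network_hypergraph V E \<longleftrightarrow> network_matrix V E (incidence_matrix V E)"

definition uda_instance :: "'s set \<Rightarrow> 'u set \<Rightarrow> ('u \<Rightarrow> 'p set) \<Rightarrow> ('s \<times> 'u \<times> 'p) set \<Rightarrow> bool" where
  "uda_instance S U P A \<longleftrightarrow> finite S \<and> finite U \<and> (\<forall>u\<in>U. finite (P u)) \<and>
     (\<forall>u\<in>U. \<forall>u'\<in>U. u \<noteq> u' \<longrightarrow> P u \<inter> P u' = {}) \<and>
     A \<subseteq> {(s, u, p). s \<in> S \<and> u \<in> U \<and> p \<in> P u}"

definition uda_vertices :: "'s set \<Rightarrow> 'u set \<Rightarrow> ('u \<Rightarrow> 'p set) \<Rightarrow> ('s + 'u + 'p) set" where
  "uda_vertices S U P = Inl ` S \<union> (Inr \<circ> Inl) ` U \<union> (Inr \<circ> Inr) ` (\<Union>u\<in>U. P u)"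

definition uda_hyperedge :: "'s \<times> 'u \<times> 'p \<Rightarrow> ('s + 'u + 'p) set" where
  "uda_hyperedge t = (case t of (s, u, p) \<Rightarrow> {Inl s, Inr (Inl u), Inr (Inr p)})"

definition uda_hyperedges :: "('s \<times> 'u \<times> 'p) set \<Rightarrow> ('s + 'u + 'p) set set" where
  "uda_hyperedges A = uda_hyperedge ` A"

end

theory Submission
  imports Defs
begin

lemma det_signed_col:
  fixes A :: "int mat"
  assumes "A \<in> carrier_mat n n"
    and "\<forall>i<n. \<forall>j<n. A$$(i,j) \<in> {-1,0,1}"
    and "\<forall>i<n. \<sigma> i \<in> {-1,1::int}"
    and "\<forall>j<n. \<forall>i<n. \<forall>i'<n. i \<noteq> i' \<and> A$$(i,j) \<noteq> 0 \<and> A$$(i',j) \<noteq> 0 \<longrightarrow>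
           \<sigma> i * A$$(i,j) + \<sigma> i' * A$$(i',j) = 0"
  shows "det A \<in> {-1,0,1}"
  using assms
proof (induction n arbitrary: A \<sigma>)
  case 0
  then show ?case by (simp add: det_def)
next
  case (Suc n)
  note A = Suc.prems(1) and ent = Suc.prems(2) and sig = Suc.prems(3) and pair = Suc.prems(4)
  show ?case
  proof (cases "\<exists>j<Suc n. \<forall>i<Suc n. \<forall>i'<Suc n. A$$(i,j) \<noteq> 0 \<and> A$$(i',j) \<noteq> 0 \<longrightarrow> i = i'")
    case True
    then obtain j where j: "j < Suc n" and uniq: "\<forall>i<Suc n. \<forall>i'<Suc n. A$$(i,j) \<noteq> 0 \<and> A$$(i',j) \<noteq> 0 \<longrightarrow> i = i'" by blast
    have lap: "det A = (\<Sum>i<Suc n. A $$ (i,j) * cofactor A i j)"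
      by (rule laplace_expansion_column[OF A j])
    show ?thesis
    proof (cases "\<exists>i0<Suc n. A$$(i0,j) \<noteq> 0")
      case False
      then have "det A = 0" unfolding lap by simp
      then show ?thesis by simp
    next
      case True
      then obtain i0 where i0: "i0 < Suc n" "A$$(i0,j) \<noteq> 0" by blast
      have "det A = (\<Sum>i\<in>{i0}. A $$ (i,j) * cofactor A i j)"
        unfolding lap
        apply (rule sum.mono_neutral_right)
        using i0 uniq by auto
      then have dA: "det A = A$$(i0,j) * ((-1)^(i0+j) * det (mat_delete A i0 j))"
        by (simp add: cofactor_def)
      define \<sigma>' where "\<sigma>' = (\<lambda>k. \<sigma> (if k < i0 then k else Suc k))"
      have MD: "mat_delete A i0 j \<in> carrier_mat n n"
        using mat_delete_carrier[OF A] by simp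
      have idx: "mat_delete A i0 j $$ (a,b) = A $$ (if a < i0 then a else Suc a, if b < j then b else Suc b)"
        if "a < n" "b < n" for a b
        using that A unfolding mat_delete_def by auto
      have "det (mat_delete A i0 j) \<in> {-1,0,1}"
      proof (rule Suc.IH[OF MD, of \<sigma>'])
        show "\<forall>i<n. \<forall>j'<n. mat_delete A i0 j $$ (i, j') \<in> {- 1, 0, 1}"
          using ent idx by auto
        show "\<forall>i<n. \<sigma>' i \<in> {- 1, 1}" using sig unfolding \<sigma>'_def by auto
        show "\<forall>j'<n. \<forall>i<n. \<forall>i'<n. i \<noteq> i' \<and> mat_delete A i0 j $$ (i, j') \<noteq> 0 \<and> mat_delete A i0 j $$ (i', j') \<noteq> 0 \<longrightarrow>
           \<sigma>' i * mat_delete A i0 j $$ (i, j') + \<sigma>' i' * mat_delete A i0 j $$ (i', j') = 0"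
        proof (intro allI impI)
          fix j' i i' assume "j' < n" "i < n" "i' < n" and h: "i \<noteq> i' \<and> mat_delete A i0 j $$ (i, j') \<noteq> 0 \<and> mat_delete A i0 j $$ (i', j') \<noteq> 0"
          let ?a = "if i < i0 then i else Suc i" and ?b = "if i' < i0 then i' else Suc i'"
            and ?c = "if j' < j then j' else Suc j'"
          have "?a \<noteq> ?b" using h by auto
          moreover have "?a < Suc n" "?b < Suc n" "?c < Suc n" using \<open>j' < n\<close> \<open>i < n\<close> \<open>i' < n\<close> by auto
          moreover have "A$$(?a,?c) \<noteq> 0 \<and> A$$(?b,?c) \<noteq> 0"
            using h idx[OF \<open>i < n\<close> \<open>j' < n\<close>] idx[OF \<open>i' < n\<close> \<open>j' < n\<close>] by simp
          ultimately have "\<sigma> ?a * A$$(?a,?c) + \<sigma> ?b * A$$(?b,?c) = 0"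
            using pair by blast
          then show "\<sigma>' i * mat_delete A i0 j $$ (i, j') + \<sigma>' i' * mat_delete A i0 j $$ (i', j') = 0"
            unfolding \<sigma>'_def using idx \<open>j' < n\<close> \<open>i < n\<close> \<open>i' < n\<close> by simp
        qed
      qed
      moreover have "A$$(i0,j) \<in> {-1,0,1}" using ent i0 j by auto
      moreover have "(-1::int)^(i0+j) \<in> {-1,1}" by (cases "even (i0+j)") auto
      ultimately show ?thesis unfolding dA by auto
    qed
  next
    case False
    then have two: "\<forall>j<Suc n. \<exists>i<Suc n. \<exists>i'<Suc n. i \<noteq> i' \<and> A$$(i,j) \<noteq> 0 \<and> A$$(i',j) \<noteq> 0" by blast
    define v where "v = vec (Suc n) \<sigma>"
    have AT: "transpose_mat A \<in> carrier_mat (Suc n) (Suc n)" using A by simp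
    have "transpose_mat A *\<^sub>v v = 0\<^sub>v (Suc n)"
    proof (rule eq_vecI)
      fix j assume j: "j < dim_vec (0\<^sub>v (Suc n))"
      then have j: "j < Suc n" by simp
      obtain i i' where ii: "i < Suc n" "i' < Suc n" "i \<noteq> i'" "A$$(i,j) \<noteq> 0" "A$$(i',j) \<noteq> 0"
        using two j by blast
      have others: "A$$(k,j) = 0" if "k < Suc n" "k \<noteq> i" "k \<noteq> i'" for k
      proof (rule ccontr)
        assume nz: "A$$(k,j) \<noteq> 0"
        have e1: "\<sigma> k * A$$(k,j) + \<sigma> i * A$$(i,j) = 0" using pair j that ii nz by blast
        have e2: "\<sigma> k * A$$(k,j) + \<sigma> i' * A$$(i',j) = 0" using pair j that ii nz by blast
        have e3: "\<sigma> i * A$$(i,j) + \<sigma> i' * A$$(i',j) = 0" using pair j ii by blast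
        have "\<sigma> i * A$$(i,j) = 0" using e1 e2 e3 by linarith
        moreover have "\<sigma> i \<noteq> 0" using sig ii by auto
        ultimately show False using ii by simp
      qed
      have "(transpose_mat A *\<^sub>v v) $ j = (\<Sum>k\<in>{0..<Suc n}. A$$(k,j) * \<sigma> k)"
        using A j unfolding v_def by (simp add: scalar_prod_def)
      also have "\<dots> = (\<Sum>k\<in>{i,i'}. A$$(k,j) * \<sigma> k)"
        apply (rule sum.mono_neutral_right) using ii others by auto
      also have "\<dots> = 0" using pair j ii by (simp add: algebra_simps)
      finally show "(transpose_mat A *\<^sub>v v) $ j = 0\<^sub>v (Suc n) $ j" using j by simp
    qed (use A in simp)
    moreover have "v \<noteq> 0\<^sub>v (Suc n)"
    proof
      assume "v = 0\<^sub>v (Suc n)"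
      then have "v $ 0 = 0" by simp
      then show False using sig unfolding v_def by auto
    qed
    moreover have "v \<in> carrier_vec (Suc n)" unfolding v_def by simp
    ultimately have "det (transpose_mat A) = 0"
      using det_0_iff_vec_prod_zero[OF AT] by blast
    then show ?thesis using det_transpose[OF A] by simp
  qed
qed


lemma sum_distinct_ind:
  assumes "distinct xs"
  shows "(\<Sum>k<length xs. if xs!k = x then (1::int) else 0) = (if x \<in> set xs then 1 else 0)"
proof (cases "x \<in> set xs")
  case True
  then obtain k0 where k0: "k0 < length xs" "xs!k0 = x" by (auto simp: in_set_conv_nth)
  have "(\<Sum>k<length xs. if xs!k = x then (1::int) else 0) = (\<Sum>k<length xs. if k = k0 then 1 else 0)"
    apply (rule sum.cong) using k0 assms nth_eq_iff_index_eq by auto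
  also have "\<dots> = 1" using k0 by simp
  finally show ?thesis using True by simp
next
  case False
  then show ?thesis by (auto simp: in_set_conv_nth intro!: sum.neutral)
qed

lemma uda_tu:
  fixes S :: "'s set" and U :: "'u set" and P :: "'u \<Rightarrow> 'p set"
    and A :: "('s \<times> 'u \<times> 'p) set"
  assumes inst: "uda_instance S U P A"
  shows "totally_unimodular (uda_vertices S U P) (uda_hyperedges A)
           (incidence_matrix (uda_vertices S U P) (uda_hyperedges A))"
  unfolding totally_unimodular_def
proof (intro allI impI)
  fix rs :: "('s + 'u + 'p) list" and cs
  assume "distinct rs \<and> distinct cs \<and> length rs = length cs \<and>
        set rs \<subseteq> uda_vertices S U P \<and> set cs \<subseteq> uda_hyperedges A"
  then have drs: "distinct rs" and lens: "length cs = length rs" and rsV: "set rs \<subseteq> uda_vertices S U P"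
    and csE: "set cs \<subseteq> uda_hyperedges A" by auto
  define n where "n = length rs"
  have disj: "\<And>u u'. u \<in> U \<Longrightarrow> u' \<in> U \<Longrightarrow> u \<noteq> u' \<Longrightarrow> P u \<inter> P u' = {}"
    and Asub: "A \<subseteq> {(s, u, p). s \<in> S \<and> u \<in> U \<and> p \<in> P u}"
    using inst unfolding uda_instance_def by auto
  define tr where "tr = (\<lambda>j. SOME t. t \<in> A \<and> cs!j = uda_hyperedge t)"
  have tr: "tr j \<in> A \<and> cs!j = uda_hyperedge (tr j)" if "j < n" for j
  proof -
    have "cs!j \<in> uda_hyperedges A" using csE that lens n_def by auto
    then have "\<exists>t. t \<in> A \<and> cs!j = uda_hyperedge t" unfolding uda_hyperedges_def by auto
    then show ?thesis unfolding tr_def by (rule someI_ex)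
  qed
  define Nf where "Nf = (\<lambda>i k. if \<exists>u p. rs!i = Inr (Inl u) \<and> rs!k = Inr (Inr p) \<and> p \<in> P u then 1 else (0::int))"
  define T where "T = mat n n (\<lambda>(i,k). (if i = k then 1 else 0) - Nf i k)"
  define Ti where "Ti = mat n n (\<lambda>(i,k). (if i = k then 1 else 0) + Nf i k)"
  define B where "B = mat n n (\<lambda>(i,j). incidence_matrix (uda_vertices S U P) (uda_hyperedges A) (rs ! i) (cs ! j))"
  have TC: "T \<in> carrier_mat n n" and TiC: "Ti \<in> carrier_mat n n" and BC: "B \<in> carrier_mat n n"
    unfolding T_def Ti_def B_def by auto
  have Nii: "Nf i i = 0" for i unfolding Nf_def by auto
  have NN: "Nf i k * Nf k l = 0" for i k l unfolding Nf_def by auto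
  have "T * Ti = 1\<^sub>m n"
  proof (rule eq_matI)
    fix i l assume il: "i < dim_row (1\<^sub>m n)" "l < dim_col (1\<^sub>m n)"
    then have i: "i < n" and l: "l < n" by auto
    have trm: "((if i = k then 1 else 0) - Nf i k) * ((if k = l then 1 else 0) + Nf k l)
        = (if k = i then (if i = l then 1 else 0) + Nf i l else 0) - (if k = l then Nf i l else 0)" for k
      using Nii[of i] Nii[of l] NN[of i k l] by (auto simp: algebra_simps)
    have "(T * Ti) $$ (i,l) = (\<Sum>k\<in>{0..<n}. ((if i = k then 1 else 0) - Nf i k) * ((if k = l then 1 else 0) + Nf k l))"
      using i l unfolding T_def Ti_def by (simp add: scalar_prod_def)
    also have "\<dots> = (\<Sum>k\<in>{0..<n}. (if k = i then (if i = l then 1 else 0) + Nf i l else 0) - (if k = l then Nf i l else 0))"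
      using trm by simp
    also have "\<dots> = (if i = l then 1 else 0)"
      using i l by (simp add: sum_subtractf)
    finally show "(T * Ti) $$ (i,l) = 1\<^sub>m n $$ (i,l)" using i l by simp
  qed (auto simp: T_def Ti_def)
  then have "det T * det Ti = 1" using det_mult[OF TC TiC] by simp
  then have detT: "det T = 1 \<or> det T = -1" by (auto simp: zmult_eq_1_iff)
  define e where "e = (\<lambda>v (s::'s, u::'u, p::'p). if v = Inl s \<or> v = Inr (Inr p) \<or> (v = Inr (Inl u) \<and> Inr (Inr p) \<notin> set rs) then 1 else (0::int))"
  have B2: "(T * B) $$ (i,j) = e (rs!i) (tr j)" if i: "i < n" and j: "j < n" for i j
  proof -
    obtain s u p where t: "tr j = (s,u,p)" by (cases "tr j") auto
    have tA: "(s,u,p) \<in> A" and cj: "cs!j = {Inl s, Inr (Inl u), Inr (Inr p)}"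
      using tr[OF j] t unfolding uda_hyperedge_def by auto
    have uU: "u \<in> U" and pP: "p \<in> P u" using tA Asub by auto
    have Bent: "B $$ (k,j) = (if rs!k \<in> {Inl s, Inr (Inl u), Inr (Inr p)} then 1 else 0)" if "k < n" for k
      using that j cj unfolding B_def incidence_matrix_def by simp
    define c where "c = (if \<exists>u'. rs!i = Inr (Inl u') \<and> p \<in> P u' then 1 else (0::int))"
    have prod: "Nf i k * B $$ (k,j) = c * (if rs!k = Inr (Inr p) then 1 else 0)" if "k < n" for k
      unfolding Bent[OF that] Nf_def c_def by auto
    have "(T * B) $$ (i,j) = (\<Sum>k\<in>{0..<n}. ((if i = k then 1 else 0) - Nf i k) * B $$ (k,j))"
      using i j BC unfolding T_def by (simp add: scalar_prod_def)
    also have "\<dots> = (\<Sum>k\<in>{0..<n}. (if i = k then 1 else 0) * B $$ (k,j)) - (\<Sum>k\<in>{0..<n}. Nf i k * B $$ (k,j))"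
      by (simp only: sum_subtractf left_diff_distrib)
    also have "\<dots> = B $$ (i,j) - c * (\<Sum>k<n. if rs!k = Inr (Inr p) then 1 else 0)"
    proof -
      have "(\<Sum>k\<in>{0..<n}. (if i = k then 1 else 0) * B $$ (k, j)) = (\<Sum>k\<in>{0..<n}. if i = k then B $$ (k, j) else 0)"
        by (rule sum.cong) auto
      also have "\<dots> = B $$ (i,j)" using i by simp
      finally have 1: "(\<Sum>k\<in>{0..<n}. (if i = k then 1 else 0) * B $$ (k, j)) = B $$ (i,j)" .
      have 2: "(\<Sum>k\<in>{0..<n}. Nf i k * B $$ (k,j)) = c * (\<Sum>k<n. if rs!k = Inr (Inr p) then 1 else 0)"
        using prod by (simp add: sum_distrib_left lessThan_atLeast0)
      show ?thesis using 1 2 by simp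
    qed
    also have "\<dots> = B $$ (i,j) - c * (if Inr (Inr p) \<in> set rs then 1 else 0)"
      using sum_distinct_ind[OF drs, of "Inr (Inr p)"] n_def by simp
    also have "\<dots> = e (rs!i) (s,u,p)"
    proof -
      have riV: "rs!i \<in> uda_vertices S U P" using rsV i n_def by auto
      have cu: "c = (if rs!i = Inr (Inl u) then 1 else 0)"
      proof (cases "\<exists>u'. rs!i = Inr (Inl u')")
        case True
        then obtain u' where u': "rs!i = Inr (Inl u')" by auto
        then have "u' \<in> U" using riV unfolding uda_vertices_def by auto
        then have "p \<in> P u' \<longleftrightarrow> u' = u" using disj[of u u'] uU pP by auto
        then show ?thesis unfolding c_def using u' by auto
      qed (auto simp: c_def)
      show ?thesis unfolding cu Bent[OF i] e_def by auto
    qed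
    finally show ?thesis using t by simp
  qed
  define \<sigma> where "\<sigma> = (\<lambda>i. if isl (rs!i) then -1 else (1::int))"
  have "det (T * B) \<in> {-1,0,1}"
  proof (rule det_signed_col[of _ n \<sigma>])
    show "T * B \<in> carrier_mat n n" using TC BC by simp
    show "\<forall>i<n. \<forall>j<n. (T * B) $$ (i, j) \<in> {- 1, 0, 1}"
      using B2 unfolding e_def by (auto split: prod.splits)
    show "\<forall>i<n. \<sigma> i \<in> {- 1, 1}" unfolding \<sigma>_def by auto
    show "\<forall>j<n. \<forall>i<n. \<forall>i'<n. i \<noteq> i' \<and> (T * B) $$ (i, j) \<noteq> 0 \<and> (T * B) $$ (i', j) \<noteq> 0 \<longrightarrow>
       \<sigma> i * (T * B) $$ (i, j) + \<sigma> i' * (T * B) $$ (i', j) = 0"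
    proof (intro allI impI)
      fix j i i' assume j: "j < n" and i: "i < n" and i': "i' < n"
        and h: "i \<noteq> i' \<and> (T * B) $$ (i, j) \<noteq> 0 \<and> (T * B) $$ (i', j) \<noteq> 0"
      obtain s u p where t: "tr j = (s,u,p)" by (cases "tr j") auto
      have ne: "rs!i \<noteq> rs!i'" using h i i' drs n_def nth_eq_iff_index_eq by auto
      have inset: "rs!i \<in> set rs" "rs!i' \<in> set rs" using i i' n_def by auto
      have hi: "rs!i = Inl s \<or> rs!i = Inr (Inr p) \<or> (rs!i = Inr (Inl u) \<and> Inr (Inr p) \<notin> set rs)"
        and hi': "rs!i' = Inl s \<or> rs!i' = Inr (Inr p) \<or> (rs!i' = Inr (Inl u) \<and> Inr (Inr p) \<notin> set rs)"
        using h B2[OF i j] B2[OF i' j] t unfolding e_def by (auto split: if_splits)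
      have v1: "(T * B) $$ (i, j) = 1" and v2: "(T * B) $$ (i', j) = 1"
        using h B2[OF i j] B2[OF i' j] t unfolding e_def by (auto split: if_splits)
      show "\<sigma> i * (T * B) $$ (i, j) + \<sigma> i' * (T * B) $$ (i', j) = 0"
        unfolding v1 v2 \<sigma>_def using hi hi' ne inset by auto
    qed
  qed
  then have "det T * det B \<in> {-1,0,1}" using det_mult[OF TC BC] by simp
  then have "det B \<in> {-1,0,1}" using detT by auto
  then show "det (mat (length rs) (length cs) (\<lambda>(i, j). incidence_matrix (uda_vertices S U P) (uda_hyperedges A) (rs ! i) (cs ! j))) \<in> {- 1, 0, 1}"
    unfolding B_def n_def lens .
qed


lemma walk_nth:
  "is_walk ta he F x w y \<Longrightarrow> i < length w \<Longrightarrow> fst (w!i) \<in> F \<and>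
     step_start ta he (w!i) = walk_verts ta he x w ! i \<and>
     step_end ta he (w!i) = walk_verts ta he x w ! Suc i"
proof (induction w arbitrary: x i)
  case Nil then show ?case by simp
next
  case (Cons st w)
  then show ?case
  proof (cases i)
    case 0 then show ?thesis using Cons.prems by (cases w) auto
  next
    case (Suc i') then show ?thesis using Cons by auto
  qed
qed

lemma walk_last: "is_walk ta he F x w y \<Longrightarrow> walk_verts ta he x w ! length w = y"
  by (induction w arbitrary: x) auto

lemma walk_first: "walk_verts ta he x w ! 0 = x"
  by (cases w) auto

lemma walk_append: "is_walk ta he F x w1 y \<Longrightarrow> is_walk ta he F y w2 z \<Longrightarrow> is_walk ta he F x (w1 @ w2) z"
  by (induction w1 arbitrary: x) auto

lemma no_cycle_depth:
  fixes d own :: "nat \<Rightarrow> nat"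
  assumes arcs: "\<forall>a\<in>F. (d (ta a) = Suc (d (he a)) \<and> own (ta a) = a) \<or> (d (he a) = Suc (d (ta a)) \<and> own (he a) = a)"
  shows "\<not> has_cycle ta he F"
proof
  assume "has_cycle ta he F"
  then obtain x w where wne: "w \<noteq> []" and wk: "is_walk ta he F x w x" and dist: "distinct (map fst w)"
    unfolding has_cycle_def by blast
  define vs where "vs = walk_verts ta he x w"
  define m where "m = length w"
  have m0: "m > 0" using wne m_def by auto
  have deep1: "own (step_start ta he st) = fst st" if "fst st \<in> F" "d (step_end ta he st) \<le> d (step_start ta he st)" for st
    using arcs that unfolding step_start_def step_end_def by (cases "snd st") fastforce+
  have deep2: "own (step_end ta he st) = fst st" if "fst st \<in> F" "d (step_start ta he st) \<le> d (step_end ta he st)" for st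
    using arcs that unfolding step_start_def step_end_def by (cases "snd st") fastforce+
  have noloop: "step_start ta he st \<noteq> step_end ta he st" if "fst st \<in> F" for st
    using arcs that unfolding step_start_def step_end_def by (cases "snd st") fastforce+
  have fin: "finite ((\<lambda>k. d (vs!k)) ` {0..<m})" by simp
  have nem: "(\<lambda>k. d (vs!k)) ` {0..<m} \<noteq> {}" using m0 by auto
  obtain i0 where i0: "i0 < m" "d (vs!i0) = Max ((\<lambda>k. d (vs!k)) ` {0..<m})"
    using Max_in[OF fin nem] by auto
  have vsm: "vs!m = vs!0" using walk_last[OF wk] walk_first unfolding vs_def m_def by simp
  have maxk: "d (vs!k) \<le> d (vs!i0)" if "k \<le> m" for k
  proof (cases "k = m")
    case True
    then show ?thesis using vsm i0 fin m0 by (simp add: Max_ge)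
  next
    case False
    then show ?thesis using that i0 fin by (simp add: Max_ge)
  qed
  have st0: "fst (w!i0) \<in> F \<and> step_start ta he (w!i0) = vs!i0 \<and> step_end ta he (w!i0) = vs!Suc i0"
    using walk_nth[OF wk, of i0] i0 unfolding vs_def m_def by simp
  have o1: "own (vs!i0) = fst (w!i0)"
    using deep1[of "w!i0"] st0 maxk[of "Suc i0"] i0 by simp
  define j where "j = (if i0 = 0 then m - 1 else i0 - 1)"
  have j: "j < m" unfolding j_def using i0 m0 by auto
  have sj: "Suc j = (if i0 = 0 then m else i0)" unfolding j_def using m0 by auto
  have stj: "fst (w!j) \<in> F \<and> step_start ta he (w!j) = vs!j \<and> step_end ta he (w!j) = vs!Suc j"
    using walk_nth[OF wk, of j] j unfolding vs_def m_def by simp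
  have endj: "vs ! Suc j = vs ! i0" using sj vsm by auto
  have o2: "own (vs!i0) = fst (w!j)"
    using deep2[of "w!j"] stj endj maxk[of j] j by simp
  show False
  proof (cases "j = i0")
    case True
    then have "i0 = 0" "m = 1" unfolding j_def using m0 i0 by (auto split: if_splits)
    then have "step_start ta he (w!i0) = step_end ta he (w!i0)"
      using st0 vsm by simp
    then show False using noloop st0 by blast
  next
    case False
    have "map fst w ! j = map fst w ! i0" using o1 o2 j i0 m_def by simp
    then have "j = i0" using dist j i0 m_def nth_eq_iff_index_eq by fastforce
    then show False using False by simp
  qed
qed


lemma uda_network:
  fixes S :: "'s set" and U :: "'u set" and P :: "'u \<Rightarrow> 'p set"
    and A :: "('s \<times> 'u \<times> 'p) set"
  assumes inst: "uda_instance S U P A"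
  shows "network_hypergraph (uda_vertices S U P) (uda_hyperedges A)"
proof -
  define V where "V = uda_vertices S U P"
  define E where "E = uda_hyperedges A"
  have fS: "finite S" and fU: "finite U" and fP: "\<And>u. u \<in> U \<Longrightarrow> finite (P u)"
    and disj: "\<And>u u'. u \<in> U \<Longrightarrow> u' \<in> U \<Longrightarrow> u \<noteq> u' \<Longrightarrow> P u \<inter> P u' = {}"
    and Asub: "A \<subseteq> {(s, u, p). s \<in> S \<and> u \<in> U \<and> p \<in> P u}"
    using inst unfolding uda_instance_def by auto
  have finV: "finite V" unfolding V_def uda_vertices_def using fS fU fP by auto
  have "A \<subseteq> S \<times> U \<times> (\<Union>u\<in>U. P u)" using Asub by auto
  moreover have "finite (S \<times> U \<times> (\<Union>u\<in>U. P u))" using fS fU fP by auto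
  ultimately have "finite A" by (rule finite_subset)
  then have finE: "finite E" unfolding E_def uda_hyperedges_def by simp
  have inV: "Inl s \<in> V \<longleftrightarrow> s \<in> S" "Inr (Inl u) \<in> V \<longleftrightarrow> u \<in> U"
    "Inr (Inr p) \<in> V \<longleftrightarrow> (\<exists>u\<in>U. p \<in> P u)" for s u p
    unfolding V_def uda_vertices_def by auto
  obtain f :: "('s + 'u + 'p) \<Rightarrow> nat" and nf where "f ` V = {..<nf}" and injf: "inj_on f V"
    using finite_imp_inj_to_nat_seg[OF finV] by blast
  obtain g :: "('s + 'u + 'p) set \<Rightarrow> nat" and ng where "g ` E = {..<ng}" and injg: "inj_on g E"
    using finite_imp_inj_to_nat_seg[OF finE] by blast
  define nd where "nd = (\<lambda>v. f v + 1)"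
  define iv where "iv = inv_into V f"
  define ih where "ih = inv_into E g"
  define uof where "uof = (\<lambda>p. SOME u. u \<in> U \<and> p \<in> P u)"
  define sof where "sof = (\<lambda>h. SOME s. Inl s \<in> (h :: ('s + 'u + 'p) set))"
  define pof where "pof = (\<lambda>h. SOME p. Inr (Inr p) \<in> (h :: ('s + 'u + 'p) set))"
  define ta where "ta = (\<lambda>a. if even a then (case iv (a div 2) of Inl s \<Rightarrow> 0 | Inr (Inl u) \<Rightarrow> nd (Inr (Inl u))
      | Inr (Inr p) \<Rightarrow> nd (Inr (Inr p))) else nd (Inl (sof (ih (a div 2)))))"
  define he where "he = (\<lambda>a. if even a then (case iv (a div 2) of Inl s \<Rightarrow> nd (Inl s) | Inr (Inl u) \<Rightarrow> 0
      | Inr (Inr p) \<Rightarrow> nd (Inr (Inl (uof p)))) else nd (Inr (Inr (pof (ih (a div 2))))))"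
  define Vs where "Vs = insert 0 (nd ` V)"
  define F where "F = (\<lambda>v. 2 * f v) ` V"
  define Es where "Es = F \<union> (\<lambda>h. 2 * g h + 1) ` E"
  have ivf: "iv (f v) = v" if "v \<in> V" for v unfolding iv_def using injf that by simp
  have ihg: "ih (g h) = h" if "h \<in> E" for h unfolding ih_def using injg that by simp
  have uof: "uof p = u" if "u \<in> U" "p \<in> P u" for u p
  proof -
    have "uof p \<in> U \<and> p \<in> P (uof p)" unfolding uof_def by (rule someI[of _ u]) (use that in simp)
    then show ?thesis using disj[of u "uof p"] that by auto
  qed
  have hyp: "sof (uda_hyperedge (s,u,p)) = s \<and> pof (uda_hyperedge (s,u,p)) = p" for s u p
    unfolding sof_def pof_def uda_hyperedge_def by auto
  have even2: "even (2 * k)" "(2 * k) div 2 = k" "\<not> even (2 * k + 1)" "(2 * k + 1) div 2 = k" for k :: nat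
    by auto
  have tS: "ta (2 * f (Inl s)) = 0" "he (2 * f (Inl s)) = nd (Inl s)" if "s \<in> S" for s
    unfolding ta_def he_def using ivf[of "Inl s"] inV that even2 by auto
  have tU: "ta (2 * f (Inr (Inl u))) = nd (Inr (Inl u))" "he (2 * f (Inr (Inl u))) = 0" if "u \<in> U" for u
    unfolding ta_def he_def using ivf[of "Inr (Inl u)"] inV that even2 by auto
  have tP: "ta (2 * f (Inr (Inr p))) = nd (Inr (Inr p))" "he (2 * f (Inr (Inr p))) = nd (Inr (Inl u))"
    if "u \<in> U" "p \<in> P u" for u p
  proof -
    have "Inr (Inr p) \<in> V" using inV that by auto
    then have "iv (f (Inr (Inr p))) = Inr (Inr p)" by (rule ivf)
    then show "ta (2 * f (Inr (Inr p))) = nd (Inr (Inr p))" "he (2 * f (Inr (Inr p))) = nd (Inr (Inl u))"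
      unfolding ta_def he_def using even2 uof[OF that] by auto
  qed
  have tE: "ta (2 * g (uda_hyperedge (s,u,p)) + 1) = nd (Inl s)" "he (2 * g (uda_hyperedge (s,u,p)) + 1) = nd (Inr (Inr p))"
    if "(s,u,p) \<in> A" for s u p
  proof -
    have "uda_hyperedge (s,u,p) \<in> E" unfolding E_def uda_hyperedges_def using that by simp
    then show "ta (2 * g (uda_hyperedge (s,u,p)) + 1) = nd (Inl s)" "he (2 * g (uda_hyperedge (s,u,p)) + 1) = nd (Inr (Inr p))"
      unfolding ta_def he_def using ihg hyp even2 by auto
  qed
  have nd0: "nd v \<noteq> 0" for v unfolding nd_def by simp
  have ndinj: "nd v = nd v' \<longleftrightarrow> v = v'" if "v \<in> V" "v' \<in> V" for v v'
    unfolding nd_def using injf that by (auto dest: inj_onD)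
  have f2inj: "2 * f v = 2 * f v' \<longleftrightarrow> v = v'" if "v \<in> V" "v' \<in> V" for v v'
    using injf that by (auto dest: inj_onD)
  have dig: "digraph Vs Es ta he"
    unfolding digraph_def
  proof (intro conjI)
    show "finite Vs" unfolding Vs_def using finV by simp
    show "finite Es" unfolding Es_def F_def using finV finE by simp
  next
    show "\<forall>a\<in>Es. ta a \<in> Vs \<and> he a \<in> Vs"
  proof
    fix a assume "a \<in> Es"
    then consider (v) v where "v \<in> V" "a = 2 * f v" | (h) h where "h \<in> E" "a = 2 * g h + 1"
      unfolding Es_def F_def by auto
    then show "ta a \<in> Vs \<and> he a \<in> Vs"
    proof cases
      case v
      then show ?thesis
      proof (cases v)
        case (Inl s) then show ?thesis using v tS inV unfolding Vs_def by auto
      next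
        case (Inr q) then show ?thesis
        proof (cases q)
          case (Inl u) then show ?thesis using v tU inV \<open>v = Inr q\<close> unfolding Vs_def by auto
        next
          case (Inr p)
          then obtain u where u: "u \<in> U" "p \<in> P u" using v \<open>v = Inr q\<close> inV by auto
          then show ?thesis using v tP[OF u] inV \<open>v = Inr q\<close> Inr unfolding Vs_def by auto
        qed
      qed
    next
      case h
      then obtain s u p where t: "(s,u,p) \<in> A" "h = uda_hyperedge (s,u,p)" unfolding E_def uda_hyperedges_def by auto
      then have "s \<in> S" "u \<in> U" "p \<in> P u" using Asub by auto
      then show ?thesis using h t tE[OF t(1)] inV unfolding Vs_def by auto
    qed
  qed
  qed
  have FV: "2 * f v \<in> F" if "v \<in> V" for v unfolding F_def using that by auto
  have down: "\<exists>w. is_walk ta he F (nd v) w 0" and up: "\<exists>w. is_walk ta he F 0 w (nd v)" if "v \<in> V" for v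
  proof -
    have "(\<exists>w. is_walk ta he F (nd v) w 0) \<and> (\<exists>w. is_walk ta he F 0 w (nd v))"
    proof (cases v)
      case (Inl s)
      then have s: "s \<in> S" using that inV by auto
      show ?thesis
      proof
        show "\<exists>w. is_walk ta he F (nd v) w 0"
          by (rule exI[of _ "[(2 * f v, False)]"]) (use s Inl FV that tS in \<open>simp add: step_start_def step_end_def\<close>)
        show "\<exists>w. is_walk ta he F 0 w (nd v)"
          by (rule exI[of _ "[(2 * f v, True)]"]) (use s Inl FV that tS in \<open>simp add: step_start_def step_end_def\<close>)
      qed
    next
      case (Inr q)
      show ?thesis
      proof (cases q)
        case (Inl u)
        then have u: "u \<in> U" using that inV Inr by auto
        show ?thesis
        proof
          show "\<exists>w. is_walk ta he F (nd v) w 0"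
            by (rule exI[of _ "[(2 * f v, True)]"]) (use u Inl Inr FV that tU in \<open>simp add: step_start_def step_end_def\<close>)
          show "\<exists>w. is_walk ta he F 0 w (nd v)"
            by (rule exI[of _ "[(2 * f v, False)]"]) (use u Inl Inr FV that tU in \<open>simp add: step_start_def step_end_def\<close>)
        qed
      next
        case (Inr p)
        then obtain u where u: "u \<in> U" "p \<in> P u" using \<open>v \<in> V\<close> inV \<open>v = Inr q\<close> by auto
        have uV: "Inr (Inl u) \<in> V" using u inV by auto
        show ?thesis
        proof
          show "\<exists>w. is_walk ta he F (nd v) w 0"
            by (rule exI[of _ "[(2 * f v, True), (2 * f (Inr (Inl u)), True)]"])
              (use u uV Inr \<open>v = Inr q\<close> FV that tU tP in \<open>simp add: step_start_def step_end_def\<close>)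
          show "\<exists>w. is_walk ta he F 0 w (nd v)"
            by (rule exI[of _ "[(2 * f (Inr (Inl u)), False), (2 * f v, False)]"])
              (use u uV Inr \<open>v = Inr q\<close> FV that tU tP in \<open>simp add: step_start_def step_end_def\<close>)
        qed
      qed
    qed
    then show "\<exists>w. is_walk ta he F (nd v) w 0" "\<exists>w. is_walk ta he F 0 w (nd v)" by blast+
  qed
  have down': "\<exists>w. is_walk ta he F x w 0" if "x \<in> Vs" for x
    using that down unfolding Vs_def by (auto intro: exI[of _ "[]"])
  have up': "\<exists>w. is_walk ta he F 0 w x" if "x \<in> Vs" for x
    using that up unfolding Vs_def by (auto intro: exI[of _ "[]"])
  define d where "d = (\<lambda>k::nat. if k = 0 then 0 else (case iv (k - 1) of Inr (Inr _) \<Rightarrow> 2 | _ \<Rightarrow> (1::nat)))"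
  define own where "own = (\<lambda>k::nat. 2 * f (iv (k - 1)))"
  have dnd: "d (nd v) = (case v of Inr (Inr _) \<Rightarrow> 2 | _ \<Rightarrow> 1)" and ownnd: "own (nd v) = 2 * f v" if "v \<in> V" for v
    unfolding d_def own_def nd_def using ivf[OF that] by auto
  have d0: "d 0 = 0" unfolding d_def by simp
  have acyc: "\<not> has_cycle ta he F"
  proof (rule no_cycle_depth[where d = d and own = own])
    show "\<forall>a\<in>F. (d (ta a) = Suc (d (he a)) \<and> own (ta a) = a) \<or> (d (he a) = Suc (d (ta a)) \<and> own (he a) = a)"
    proof
      fix a assume "a \<in> F"
      then obtain v where v: "v \<in> V" "a = 2 * f v" unfolding F_def by auto
      show "(d (ta a) = Suc (d (he a)) \<and> own (ta a) = a) \<or> (d (he a) = Suc (d (ta a)) \<and> own (he a) = a)"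
      proof (cases v)
        case (Inl s) then show ?thesis using v tS inV dnd ownnd d0 by auto
      next
        case (Inr q) then show ?thesis
        proof (cases q)
          case (Inl u) then show ?thesis using v tU inV dnd ownnd d0 \<open>v = Inr q\<close> by auto
        next
          case (Inr p)
          then obtain u where u: "u \<in> U" "p \<in> P u" using v \<open>v = Inr q\<close> inV by auto
          have uV: "Inr (Inl u) \<in> V" using u inV by auto
          show ?thesis using v tP[OF u] dnd[OF uV] dnd ownnd d0 \<open>v = Inr q\<close> Inr by auto
        qed
      qed
    qed
  qed
  have st: "spanning_tree Vs Es ta he F"
    unfolding spanning_tree_def
  proof (intro conjI ballI)
    show "F \<subseteq> Es" unfolding Es_def by auto
    show "\<not> has_cycle ta he F" by (rule acyc)
  next
    fix x y assume "x \<in> Vs" "y \<in> Vs"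
    then obtain w1 w2 where "is_walk ta he F x w1 0" "is_walk ta he F 0 w2 y" using down' up' by blast
    then show "\<exists>w. is_walk ta he F x w y" using walk_append by blast
  qed
  define \<rho> where "\<rho> = (\<lambda>v. 2 * f v)"
  define \<gamma> where "\<gamma> = (\<lambda>h. 2 * g h + 1)"
  have b1: "bij_betw \<rho> V F" unfolding bij_betw_def \<rho>_def F_def inj_on_def using f2inj by auto
  have "inj_on \<gamma> E" unfolding inj_on_def \<gamma>_def using injg by (auto dest: inj_onD)
  moreover have "\<gamma> ` E = Es - F" unfolding \<gamma>_def Es_def F_def by auto presburger
  ultimately have b2: "bij_betw \<gamma> E (Es - F)" unfolding bij_betw_def by simp
  have cols: "\<forall>c\<in>E. \<exists>p. is_simple_path ta he F (he (\<gamma> c)) p (ta (\<gamma> c)) \<and>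
          (\<forall>r\<in>V. incidence_matrix V E r c = (if (\<rho> r, True) \<in> set p then 1
                            else if (\<rho> r, False) \<in> set p then -1 else 0))"
  proof
    fix c assume "c \<in> E"
    then obtain s u p where t: "(s,u,p) \<in> A" "c = uda_hyperedge (s,u,p)" unfolding E_def uda_hyperedges_def by auto
    then have sS: "s \<in> S" and uU: "u \<in> U" and pP: "p \<in> P u" using Asub by auto
    have vV: "Inl s \<in> V" "Inr (Inl u) \<in> V" "Inr (Inr p) \<in> V" using sS uU pP inV by auto
    define pth where "pth = [(2 * f (Inr (Inr p)), True), (2 * f (Inr (Inl u)), True), (2 * f (Inl s), True)]"
    have "is_walk ta he F (nd (Inr (Inr p))) pth (nd (Inl s))"
      unfolding pth_def using vV FV tS[OF sS] tU[OF uU] tP[OF uU pP] by (simp add: step_start_def step_end_def)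
    moreover have "distinct (walk_verts ta he (nd (Inr (Inr p))) pth)"
      unfolding pth_def using vV tS[OF sS] tU[OF uU] tP[OF uU pP] nd0 ndinj
      by (simp add: step_start_def step_end_def)
    ultimately have sp: "is_simple_path ta he F (he (\<gamma> c)) pth (ta (\<gamma> c))"
      unfolding is_simple_path_def \<gamma>_def t(2) using tE[OF t(1)] by simp
    have "\<forall>r\<in>V. incidence_matrix V E r c = (if (\<rho> r, True) \<in> set pth then 1
                            else if (\<rho> r, False) \<in> set pth then -1 else 0)"
    proof
      fix r assume r: "r \<in> V"
      have "(\<rho> r, True) \<in> set pth \<longleftrightarrow> r \<in> c"
        unfolding pth_def \<rho>_def t(2) uda_hyperedge_def using f2inj[OF r] vV by auto
      moreover have "(\<rho> r, False) \<notin> set pth" unfolding pth_def by simp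
      ultimately show "incidence_matrix V E r c = (if (\<rho> r, True) \<in> set pth then 1
                            else if (\<rho> r, False) \<in> set pth then -1 else 0)"
        unfolding incidence_matrix_def by simp
    qed
    then show "\<exists>p. is_simple_path ta he F (he (\<gamma> c)) p (ta (\<gamma> c)) \<and>
          (\<forall>r\<in>V. incidence_matrix V E r c = (if (\<rho> r, True) \<in> set p then 1
                            else if (\<rho> r, False) \<in> set p then -1 else 0))"
      using sp by blast
  qed
  have "network_matrix V E (incidence_matrix V E)"
    unfolding network_matrix_def
    using dig st b1 b2 cols by blast
  then show ?thesis unfolding network_hypergraph_def V_def E_def .
qed

theorem theorem3p2:
  fixes S :: "'s set" and U :: "'u set" and P :: "'u \<Rightarrow> 'p set"
    and A :: "('s \<times> 'u \<times> 'p) set"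
  assumes "uda_instance S U P A"
  shows "network_hypergraph (uda_vertices S U P) (uda_hyperedges A)
       \<and> totally_unimodular (uda_vertices S U P) (uda_hyperedges A)
           (incidence_matrix (uda_vertices S U P) (uda_hyperedges A))"
  using uda_network[OF assms] uda_tu[OF assms] by blast

end
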